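(* Let $B_1,\dots,B_n$ be independent real-valued service times with finite means $\mu_i$, each with a distribution symmetric around its mean, and put $X_i=B_i-\mu_i$. Fix a sequence $\tau\in\mathsf S_n$ and use the mean-based schedule. Then for each $k\in\{1,\dots,n-1\}$ and each $\ell\in\{0,1,\dots,k\}$, $$\mathbb EW_{k+1}\ge\tfrac12\Bigl(\mathbb E\bigl(X_{\tau(1)}+\cdots+X_{\tau(k)}\bigr)^++\mathbb E\bigl(X_{\tau(1)}+\cdots+X_{\tau(\ell)}\bigr)^++\mathbb E\bigl(X_{\tau(\ell+1)}+\cdots+X_{\tau(k)}\bigr)^+\Bigr),$$ with empty sums equal to $0$.
   Context: Under sequence $\tau$ ($\tau(i)$ the patient in slot $i$) and the mean-based schedule (interarrival time after patient $j$ equal to $\mu_j$), the waiting times are $W_1=0$, $W_{i+1}=(W_i+X_{\tau(i)})^+$ with $a^+=\max\{0,a\}$. *)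

theory Defs
  imports "HOL-Probability.Probability" "HOL-Combinatorics.Permutations"
begin

text \<open>Waiting times under sequence tau and the mean-based schedule, 1-indexed:
  W 1 = 0 and W (i+1) = max 0 (W i + X (tau i)).  The value at index 0 is a dummy 0.\<close>
fun wait :: "(nat \<Rightarrow> real) \<Rightarrow> (nat \<Rightarrow> nat) \<Rightarrow> nat \<Rightarrow> real" where
  "wait X \<tau> 0 = 0"
| "wait X \<tau> (Suc i) = (if i = 0 then 0 else max 0 (wait X \<tau> i + X (\<tau> i)))"

end

theory Submission
  imports Defs
begin

definition hh :: "real \<Rightarrow> real \<Rightarrow> real" where
  "hh a c = max 0 (c + max 0 a) - 1/2 * (max 0 (a + c) + max 0 a + max 0 c)"

lemma hh_sym: "hh a c + hh (-a) c + hh a (-c) + hh (-a) (-c) \<ge> 0"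
  unfolding hh_def max_def by (auto simp: field_simps)

lemma wait_nonneg: "0 \<le> wait X \<tau> i"
  by (cases i) auto

lemma wait_ge_sum:
  assumes "1 \<le> j" "j \<le> Suc i"
  shows "(\<Sum>m=j..i. X (\<tau> m)) \<le> wait X \<tau> (Suc i)"
  using assms
proof (induction i arbitrary: j)
  case 0
  then show ?case by (simp add: wait_nonneg)
next
  case (Suc i)
  show ?case
  proof (cases "j = Suc (Suc i)")
    case True
    then show ?thesis by simp
  next
    case False
    then have "j \<le> Suc i" using Suc.prems by simp
    then have "(\<Sum>m=j..Suc i. X (\<tau> m)) = (\<Sum>m=j..i. X (\<tau> m)) + X (\<tau> (Suc i))"
      by (simp add: sum.atLeast_Suc_atMost_Suc_shift sum.cl_ivl_Suc)
    also have "\<dots> \<le> wait X \<tau> (Suc i) + X (\<tau> (Suc i))"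
      using Suc.IH[of j] Suc.prems \<open>j \<le> Suc i\<close> by simp
    finally show ?thesis by simp
  qed
qed


lemma (in prob_space) wait_integrable:
  assumes "\<And>m. 1 \<le> m \<Longrightarrow> m \<le> i \<Longrightarrow> integrable M (\<lambda>\<omega>. X (\<tau> m) \<omega>)"
  shows "integrable M (\<lambda>\<omega>. wait (\<lambda>j. X j \<omega>) \<tau> (Suc i))"
  using assms
proof (induction i)
  case 0
  then show ?case by simp
next
  case (Suc i)
  have "integrable M (\<lambda>\<omega>. max 0 (wait (\<lambda>j. X j \<omega>) \<tau> (Suc i) + X (\<tau> (Suc i)) \<omega>))"
    using Suc by (intro integrable_max integrable_add) auto
  then show ?case by simp
qed

lemma (in prob_space) sym_flip:
  fixes X :: "nat \<Rightarrow> 'a \<Rightarrow> real" and g :: "(nat \<Rightarrow> real) \<Rightarrow> real"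
  assumes I: "I \<noteq> {}"
    and ind: "indep_vars (\<lambda>_. borel) X I"
    and sym: "\<And>i. i \<in> I \<Longrightarrow> distr M borel (X i) = distr M borel (\<lambda>\<omega>. - X i \<omega>)"
    and g: "g \<in> borel_measurable (\<Pi>\<^sub>M i\<in>I. borel)"
  shows "integral\<^sup>L M (\<lambda>\<omega>. g (\<lambda>i\<in>I. X i \<omega>))
       = integral\<^sup>L M (\<lambda>\<omega>. g (\<lambda>i\<in>I. if i \<in> S then - X i \<omega> else X i \<omega>))"
proof -
  define Y where "Y = (\<lambda>i \<omega>. if i \<in> S then - X i \<omega> else X i \<omega>)"
  have rvX: "\<And>i. i \<in> I \<Longrightarrow> X i \<in> borel_measurable M"
    using ind unfolding indep_vars_def by auto
  have rvY: "\<And>i. i \<in> I \<Longrightarrow> Y i \<in> borel_measurable M"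
    using rvX unfolding Y_def by auto
  have indY: "indep_vars (\<lambda>_. borel) Y I"
  proof -
    have "indep_vars (\<lambda>_. borel) (\<lambda>i x. (if i \<in> S then uminus else id) (X i x)) I"
      by (rule indep_vars_compose2[OF ind]) auto
    moreover have "(\<lambda>i x. (if i \<in> S then uminus else id) (X i x)) = Y"
      unfolding Y_def by (auto simp: fun_eq_iff)
    ultimately show ?thesis by simp
  qed
  have dY: "\<And>i. i \<in> I \<Longrightarrow> distr M borel (Y i) = distr M borel (X i)"
    unfolding Y_def by (case_tac "i \<in> S") (simp_all add: sym)
  have eqX: "distr M (\<Pi>\<^sub>M i\<in>I. borel) (\<lambda>x. \<lambda>i\<in>I. X i x) = (\<Pi>\<^sub>M i\<in>I. distr M borel (X i))"
    using indep_vars_iff_distr_eq_PiM'[OF I, where M'="\<lambda>_. borel" and X=X] rvX ind by auto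
  have eqY: "distr M (\<Pi>\<^sub>M i\<in>I. borel) (\<lambda>x. \<lambda>i\<in>I. Y i x) = (\<Pi>\<^sub>M i\<in>I. distr M borel (Y i))"
    using indep_vars_iff_distr_eq_PiM'[OF I, where M'="\<lambda>_. borel" and X=Y] rvY indY by auto
  have PP: "(\<Pi>\<^sub>M i\<in>I. distr M borel (Y i)) = (\<Pi>\<^sub>M i\<in>I. distr M borel (X i))"
    by (intro PiM_cong) (auto simp: dY)
  have mX: "(\<lambda>x. \<lambda>i\<in>I. X i x) \<in> measurable M (\<Pi>\<^sub>M i\<in>I. borel)"
    using rvX by (intro measurable_restrict) auto
  have mY: "(\<lambda>x. \<lambda>i\<in>I. Y i x) \<in> measurable M (\<Pi>\<^sub>M i\<in>I. borel)"
    using rvY by (intro measurable_restrict) auto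
  have "integral\<^sup>L M (\<lambda>\<omega>. g (\<lambda>i\<in>I. X i \<omega>)) = integral\<^sup>L (distr M (\<Pi>\<^sub>M i\<in>I. borel) (\<lambda>x. \<lambda>i\<in>I. X i x)) g"
    using integral_distr[OF mX g] by simp
  also have "\<dots> = integral\<^sup>L (distr M (\<Pi>\<^sub>M i\<in>I. borel) (\<lambda>x. \<lambda>i\<in>I. Y i x)) g"
    using eqX eqY PP by simp
  also have "\<dots> = integral\<^sup>L M (\<lambda>\<omega>. g (\<lambda>i\<in>I. Y i \<omega>))"
    using integral_distr[OF mY g] by simp
  finally show ?thesis unfolding Y_def .
qed

lemma (in prob_space) hh_parts:
  fixes f g :: "'a \<Rightarrow> real"
  assumes "integrable M f" "integrable M g"
  shows "integrable M (\<lambda>\<omega>. max 0 (g \<omega> + max 0 (f \<omega>)))"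
    and "integrable M (\<lambda>\<omega>. max 0 (f \<omega> + g \<omega>))"
    and "integrable M (\<lambda>\<omega>. max 0 (f \<omega>))"
    and "integrable M (\<lambda>\<omega>. max 0 (g \<omega>))"
  using assms by auto

lemma (in prob_space) hh_integrable:
  fixes f g :: "'a \<Rightarrow> real"
  assumes "integrable M f" "integrable M g"
  shows "integrable M (\<lambda>\<omega>. hh (f \<omega>) (g \<omega>))"
  unfolding hh_def using hh_parts[OF assms]
  by (intro Bochner_Integration.integrable_diff integrable_mult_right Bochner_Integration.integrable_add) auto

lemma (in prob_space) hh_integral:
  fixes f g :: "'a \<Rightarrow> real"
  assumes "integrable M f" "integrable M g"
  shows "integral\<^sup>L M (\<lambda>\<omega>. hh (f \<omega>) (g \<omega>)) =
    integral\<^sup>L M (\<lambda>\<omega>. max 0 (g \<omega> + max 0 (f \<omega>))) - 1/2 * (integral\<^sup>L M (\<lambda>\<omega>. max 0 (f \<omega> + g \<omega>))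
      + integral\<^sup>L M (\<lambda>\<omega>. max 0 (f \<omega>)) + integral\<^sup>L M (\<lambda>\<omega>. max 0 (g \<omega>)))"
proof -
  have i1: "integrable M (\<lambda>\<omega>. max 0 (g \<omega> + max 0 (f \<omega>)))"
    using assms by auto
  have i2: "integrable M (\<lambda>\<omega>. max 0 (f \<omega> + g \<omega>))"
    using assms by auto
  have i3: "integrable M (\<lambda>\<omega>. max 0 (f \<omega>))"
    using assms by auto
  have i4: "integrable M (\<lambda>\<omega>. max 0 (g \<omega>))"
    using assms by auto
  show ?thesis unfolding hh_def
    using i1 i2 i3 i4 by (simp add: integral_diff integral_add integrable_add integrable_mult_right)
qed

theorem lemma3p4:
  fixes M :: "'a measure" and B :: "nat \<Rightarrow> 'a \<Rightarrow> real" and \<mu> :: "nat \<Rightarrow> real"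
    and n k l :: nat and \<tau> :: "nat \<Rightarrow> nat"
  assumes "prob_space M"
    and "prob_space.indep_vars M (\<lambda>_. borel) B {1..n}"
    and "\<And>i. i \<in> {1..n} \<Longrightarrow> integrable M (B i)"
    and "\<And>i. i \<in> {1..n} \<Longrightarrow> \<mu> i = prob_space.expectation M (B i)"
    and "\<And>i. i \<in> {1..n} \<Longrightarrow>
           distr M borel (\<lambda>\<omega>. B i \<omega> - \<mu> i) = distr M borel (\<lambda>\<omega>. \<mu> i - B i \<omega>)"
    and "\<tau> permutes {1..n}"
    and "1 \<le> k" and "k \<le> n - 1" and "l \<le> k"
  shows "prob_space.expectation M (\<lambda>\<omega>. wait (\<lambda>j. B j \<omega> - \<mu> j) \<tau> (k + 1))
     \<ge> (1/2) * (prob_space.expectation M (\<lambda>\<omega>. max 0 (\<Sum>i=1..k. B (\<tau> i) \<omega> - \<mu> (\<tau> i)))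
              + prob_space.expectation M (\<lambda>\<omega>. max 0 (\<Sum>i=1..l. B (\<tau> i) \<omega> - \<mu> (\<tau> i)))
              + prob_space.expectation M (\<lambda>\<omega>. max 0 (\<Sum>i=l+1..k. B (\<tau> i) \<omega> - \<mu> (\<tau> i))))"
proof -
  interpret P: prob_space M by fact
  define I where "I = {1..n}"
  define X where "X = (\<lambda>i \<omega>. B i \<omega> - \<mu> i)"
  have n1: "1 \<le> n" using assms(7,8) by linarith
  have I: "I \<noteq> {}" using n1 unfolding I_def by simp
  have tauI: "\<tau> i \<in> I" if "i \<in> {1..k}" for i
  proof -
    have "i \<in> {1..n}" using that assms(8) by auto
    then show ?thesis unfolding I_def using permutes_in_image[OF assms(6), of i] by blast
  qed
  have injt: "inj \<tau>" using permutes_inj[OF assms(6)] .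
  have indX: "P.indep_vars (\<lambda>_. borel) X I"
  proof -
    have "P.indep_vars (\<lambda>_. borel) (\<lambda>i x. (\<lambda>b. b - \<mu> i) (B i x)) I"
      by (rule P.indep_vars_compose2[OF assms(2)[folded I_def]]) auto
    then show ?thesis unfolding X_def by simp
  qed
  have symX: "\<And>i. i \<in> I \<Longrightarrow> distr M borel (X i) = distr M borel (\<lambda>\<omega>. - X i \<omega>)"
    using assms(5) unfolding X_def I_def by simp
  have intX: "\<And>i. i \<in> I \<Longrightarrow> integrable M (X i)"
    using assms(3) unfolding X_def I_def by auto
  define gA where "gA = (\<lambda>v::nat \<Rightarrow> real. \<Sum>i=1..l. v (\<tau> i))"
  define gC where "gC = (\<lambda>v::nat \<Rightarrow> real. \<Sum>i=l+1..k. v (\<tau> i))"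
  define A where "A = (\<lambda>\<omega>. \<Sum>i=1..l. X (\<tau> i) \<omega>)"
  define C where "C = (\<lambda>\<omega>. \<Sum>i=l+1..k. X (\<tau> i) \<omega>)"
  have compm: "\<And>j. j \<in> I \<Longrightarrow> (\<lambda>v. v j) \<in> borel_measurable (\<Pi>\<^sub>M i\<in>I. (borel :: real measure))"
    by (rule measurable_component_singleton)
  have mA[measurable]: "gA \<in> borel_measurable (\<Pi>\<^sub>M i\<in>I. (borel :: real measure))"
    unfolding gA_def using assms(9) by (intro borel_measurable_sum compm tauI) auto
  have mC[measurable]: "gC \<in> borel_measurable (\<Pi>\<^sub>M i\<in>I. (borel :: real measure))"
    unfolding gC_def by (intro borel_measurable_sum compm tauI) auto
  define g where "g = (\<lambda>v. hh (gA v) (gC v))"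
  have mg: "g \<in> borel_measurable (\<Pi>\<^sub>M i\<in>I. (borel :: real measure))"
    unfolding g_def hh_def by measurable
  have intA: "integrable M A" unfolding A_def using assms(9) by (intro Bochner_Integration.integrable_sum intX tauI) auto
  have intC: "integrable M C" unfolding C_def by (intro Bochner_Integration.integrable_sum intX tauI) auto
  have flipE: "integral\<^sup>L M (\<lambda>\<omega>. g (\<lambda>i\<in>I. X i \<omega>))
       = integral\<^sup>L M (\<lambda>\<omega>. g (\<lambda>i\<in>I. if i \<in> S then - X i \<omega> else X i \<omega>))" for S
    by (rule P.sym_flip[OF I indX symX mg])
  have e0: "g (\<lambda>i\<in>I. X i \<omega>) = hh (A \<omega>) (C \<omega>)" for \<omega>
    unfolding g_def gA_def gC_def A_def C_def using tauI assms(9)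
    by (intro arg_cong2[where f=hh] sum.cong) auto
  have e1: "g (\<lambda>i\<in>I. if i \<in> \<tau> ` {1..l} then - X i \<omega> else X i \<omega>) = hh (- A \<omega>) (C \<omega>)" for \<omega>
  proof -
    have "gA (\<lambda>i\<in>I. if i \<in> \<tau> ` {1..l} then - X i \<omega> else X i \<omega>) = - A \<omega>"
      unfolding gA_def A_def sum_negf[symmetric] using tauI assms(9) by (intro sum.cong) auto
    moreover have "gC (\<lambda>i\<in>I. if i \<in> \<tau> ` {1..l} then - X i \<omega> else X i \<omega>) = C \<omega>"
      unfolding gC_def C_def using tauI injt by (intro sum.cong) (auto simp: inj_eq)
    ultimately show ?thesis unfolding g_def by simp
  qed
  have e2: "g (\<lambda>i\<in>I. if i \<in> \<tau> ` {l+1..k} then - X i \<omega> else X i \<omega>) = hh (A \<omega>) (- C \<omega>)" for \<omega>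
  proof -
    have "gA (\<lambda>i\<in>I. if i \<in> \<tau> ` {l+1..k} then - X i \<omega> else X i \<omega>) = A \<omega>"
      unfolding gA_def A_def using tauI injt assms(9) by (intro sum.cong) (auto simp: inj_eq)
    moreover have "gC (\<lambda>i\<in>I. if i \<in> \<tau> ` {l+1..k} then - X i \<omega> else X i \<omega>) = - C \<omega>"
      unfolding gC_def C_def sum_negf[symmetric] using tauI by (intro sum.cong) auto
    ultimately show ?thesis unfolding g_def by simp
  qed
  have e3: "g (\<lambda>i\<in>I. if i \<in> \<tau> ` {1..k} then - X i \<omega> else X i \<omega>) = hh (- A \<omega>) (- C \<omega>)" for \<omega>
  proof -
    have "gA (\<lambda>i\<in>I. if i \<in> \<tau> ` {1..k} then - X i \<omega> else X i \<omega>) = - A \<omega>"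
      unfolding gA_def A_def sum_negf[symmetric] using tauI injt assms(9) by (intro sum.cong) (auto simp: inj_eq)
    moreover have "gC (\<lambda>i\<in>I. if i \<in> \<tau> ` {1..k} then - X i \<omega> else X i \<omega>) = - C \<omega>"
      unfolding gC_def C_def sum_negf[symmetric] using tauI by (intro sum.cong) auto
    ultimately show ?thesis unfolding g_def by simp
  qed
  have E1: "integral\<^sup>L M (\<lambda>\<omega>. hh (A \<omega>) (C \<omega>)) = integral\<^sup>L M (\<lambda>\<omega>. hh (- A \<omega>) (C \<omega>))"
    using flipE[of "\<tau> ` {1..l}"] unfolding e0 e1 .
  have E2: "integral\<^sup>L M (\<lambda>\<omega>. hh (A \<omega>) (C \<omega>)) = integral\<^sup>L M (\<lambda>\<omega>. hh (A \<omega>) (- C \<omega>))"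
    using flipE[of "\<tau> ` {l+1..k}"] unfolding e0 e2 .
  have E3: "integral\<^sup>L M (\<lambda>\<omega>. hh (A \<omega>) (C \<omega>)) = integral\<^sup>L M (\<lambda>\<omega>. hh (- A \<omega>) (- C \<omega>))"
    using flipE[of "\<tau> ` {1..k}"] unfolding e0 e3 .
  have iA': "integrable M (\<lambda>\<omega>. - A \<omega>)" using intA by simp
  have iC': "integrable M (\<lambda>\<omega>. - C \<omega>)" using intC by simp
  have h1: "integrable M (\<lambda>\<omega>. hh (A \<omega>) (C \<omega>))" by (rule P.hh_integrable[OF intA intC])
  have h2: "integrable M (\<lambda>\<omega>. hh (- A \<omega>) (C \<omega>))" by (rule P.hh_integrable[OF iA' intC])
  have h3: "integrable M (\<lambda>\<omega>. hh (A \<omega>) (- C \<omega>))" by (rule P.hh_integrable[OF intA iC'])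
  have h4: "integrable M (\<lambda>\<omega>. hh (- A \<omega>) (- C \<omega>))" by (rule P.hh_integrable[OF iA' iC'])
  have "0 \<le> integral\<^sup>L M (\<lambda>\<omega>. hh (A \<omega>) (C \<omega>) + hh (- A \<omega>) (C \<omega>) + hh (A \<omega>) (- C \<omega>) + hh (- A \<omega>) (- C \<omega>))"
    by (intro Bochner_Integration.integral_nonneg hh_sym)
  also have "\<dots> = 4 * integral\<^sup>L M (\<lambda>\<omega>. hh (A \<omega>) (C \<omega>))"
    using h1 h2 h3 h4 E1 E2 E3 by (simp add: integral_add)
  finally have Hpos: "0 \<le> integral\<^sup>L M (\<lambda>\<omega>. hh (A \<omega>) (C \<omega>))" by simp
  have W_eq: "wait (\<lambda>j. B j \<omega> - \<mu> j) \<tau> (k + 1) = wait (\<lambda>j. X j \<omega>) \<tau> (Suc k)" for \<omega>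
    unfolding X_def by simp
  have intW: "integrable M (\<lambda>\<omega>. wait (\<lambda>j. X j \<omega>) \<tau> (Suc k))"
    using tauI intX by (intro P.wait_integrable) auto
  have intL: "integrable M (\<lambda>\<omega>. max 0 (C \<omega> + max 0 (A \<omega>)))"
    using intA intC by auto
  have sumsplit: "(\<Sum>i=1..k. X (\<tau> i) \<omega>) = A \<omega> + C \<omega>" for \<omega>
    unfolding A_def C_def using sum.ub_add_nat[of 1 l "\<lambda>i. X (\<tau> i) \<omega>" "k - l"] assms(9) by simp
  have Wge: "max 0 (C \<omega> + max 0 (A \<omega>)) \<le> wait (\<lambda>j. X j \<omega>) \<tau> (Suc k)" for \<omega>
  proof -
    have "0 \<le> wait (\<lambda>j. X j \<omega>) \<tau> (Suc k)" by (rule wait_nonneg)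
    moreover have "A \<omega> + C \<omega> \<le> wait (\<lambda>j. X j \<omega>) \<tau> (Suc k)"
      using wait_ge_sum[of 1 k "\<lambda>j. X j \<omega>" \<tau>] sumsplit[of \<omega>] by simp
    moreover have "C \<omega> \<le> wait (\<lambda>j. X j \<omega>) \<tau> (Suc k)"
      using wait_ge_sum[of "l+1" k "\<lambda>j. X j \<omega>" \<tau>] assms(9) unfolding C_def by simp
    ultimately show ?thesis by linarith
  qed
  have "integral\<^sup>L M (\<lambda>\<omega>. max 0 (C \<omega> + max 0 (A \<omega>))) \<le> integral\<^sup>L M (\<lambda>\<omega>. wait (\<lambda>j. X j \<omega>) \<tau> (Suc k))"
    by (intro integral_mono intW intL Wge)
  moreover note Hpos[unfolded P.hh_integral[OF intA intC]]
  ultimately have "integral\<^sup>L M (\<lambda>\<omega>. wait (\<lambda>j. X j \<omega>) \<tau> (Suc k)) \<ge> 1/2 * (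
      integral\<^sup>L M (\<lambda>\<omega>. max 0 (A \<omega> + C \<omega>)) + integral\<^sup>L M (\<lambda>\<omega>. max 0 (A \<omega>)) + integral\<^sup>L M (\<lambda>\<omega>. max 0 (C \<omega>)))"
    by linarith
  then show ?thesis
    unfolding W_eq sumsplit[symmetric] unfolding A_def C_def X_def by simp
qed

end
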